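(* Let $S$ be a nontrivial subdirectly irreducible member of $\mathsf V(S_7)$. Then $S$ is a flat semiring with zero $0$, it has a least multiplicative ideal $I$ among the ideals different from $\{0\}$, and: $I$ has exactly two elements; $E(S)$ has at most two elements; if $|E(S)|=1$ then $S\in\mathbf N$; and if $|E(S)|=2$ then either $S$ is isomorphic to $M_2$ or $S$ contains a subsemiring isomorphic to $S_7$.
   Context: A flat semiring is an ai-semiring (semilattice $(S,+)$, semigroup $(S,\cdot)$, distributive laws) whose multiplicative reduct has a zero element $0$ and in which $x+y=0$ for all distinct $x,y$. $S_7$ is the ai-semiring on $\{\infty,a,1\}$ with $x+x=x$, $x+y=\infty$ for $x\neq y$, and commutative multiplication with $\infty$ a zero, $a\cdot a=\infty$, $a\cdot 1=a$, $1\cdot1=1$; $\mathsf V(S_7)$ is the variety it generates. $M_2$ is the two-element flat semiring $\{1,0\}$ with $1\cdot1=1$. $E(S)$ denotes the set of multiplicative idempotents of $S$. $\mathbf N$ denotes the subvariety of $\mathsf V(S_7)$ defined by the identity $x^2y\approx x^2$. A multiplicative ideal is a subset $J$ with $SJ\cup JS\subseteq J$. *)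

theory Defs
  imports Main
begin

definition ai_semiring :: "('a \<Rightarrow> 'a \<Rightarrow> 'a) \<Rightarrow> ('a \<Rightarrow> 'a \<Rightarrow> 'a) \<Rightarrow> bool" where
  "ai_semiring add mul \<longleftrightarrow>
     (\<forall>x y z. add (add x y) z = add x (add y z)) \<and>
     (\<forall>x y. add x y = add y x) \<and>
     (\<forall>x. add x x = x) \<and>
     (\<forall>x y z. mul (mul x y) z = mul x (mul y z)) \<and>
     (\<forall>x y z. mul x (add y z) = add (mul x y) (mul x z)) \<and>
     (\<forall>x y z. mul (add x y) z = add (mul x z) (mul y z))"

definition mult_zero :: "('a \<Rightarrow> 'a \<Rightarrow> 'a) \<Rightarrow> 'a \<Rightarrow> bool" where
  "mult_zero mul z \<longleftrightarrow> (\<forall>x. mul z x = z \<and> mul x z = z)"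

definition flat_semiring :: "('a \<Rightarrow> 'a \<Rightarrow> 'a) \<Rightarrow> ('a \<Rightarrow> 'a \<Rightarrow> 'a) \<Rightarrow> 'a \<Rightarrow> bool" where
  "flat_semiring add mul z \<longleftrightarrow>
     ai_semiring add mul \<and> mult_zero mul z \<and> (\<forall>x y. x \<noteq> y \<longrightarrow> add x y = z)"

definition mult_ideal :: "('a \<Rightarrow> 'a \<Rightarrow> 'a) \<Rightarrow> 'a set \<Rightarrow> bool" where
  "mult_ideal mul J \<longleftrightarrow> J \<noteq> {} \<and> (\<forall>s j. j \<in> J \<longrightarrow> mul s j \<in> J \<and> mul j s \<in> J)"

definition idempotents :: "('a \<Rightarrow> 'a \<Rightarrow> 'a) \<Rightarrow> 'a set" where
  "idempotents mul = {x. mul x x = x}"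

definition congruence :: "('a \<Rightarrow> 'a \<Rightarrow> 'a) \<Rightarrow> ('a \<Rightarrow> 'a \<Rightarrow> 'a) \<Rightarrow> ('a \<times> 'a) set \<Rightarrow> bool" where
  "congruence add mul R \<longleftrightarrow> equiv UNIV R \<and>
     (\<forall>a b c d. (a, b) \<in> R \<longrightarrow> (c, d) \<in> R \<longrightarrow>
        (add a c, add b d) \<in> R \<and> (mul a c, mul b d) \<in> R)"

definition subdirectly_irreducible :: "('a \<Rightarrow> 'a \<Rightarrow> 'a) \<Rightarrow> ('a \<Rightarrow> 'a \<Rightarrow> 'a) \<Rightarrow> bool" where
  "subdirectly_irreducible add mul \<longleftrightarrow>
     (\<exists>x y :: 'a. x \<noteq> y) \<and>
     (\<exists>M. congruence add mul M \<and> M \<noteq> Id \<and>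
          (\<forall>R. congruence add mul R \<and> R \<noteq> Id \<longrightarrow> M \<subseteq> R))"

datatype 'v trm = Var 'v | TAdd "'v trm" "'v trm" | TMul "'v trm" "'v trm"

fun eval :: "('a \<Rightarrow> 'a \<Rightarrow> 'a) \<Rightarrow> ('a \<Rightarrow> 'a \<Rightarrow> 'a) \<Rightarrow> ('v \<Rightarrow> 'a) \<Rightarrow> 'v trm \<Rightarrow> 'a" where
  "eval add mul \<rho> (Var v) = \<rho> v"
| "eval add mul \<rho> (TAdd t u) = add (eval add mul \<rho> t) (eval add mul \<rho> u)"
| "eval add mul \<rho> (TMul t u) = mul (eval add mul \<rho> t) (eval add mul \<rho> u)"

definition satisfies :: "('a \<Rightarrow> 'a \<Rightarrow> 'a) \<Rightarrow> ('a \<Rightarrow> 'a \<Rightarrow> 'a) \<Rightarrow> nat trm \<Rightarrow> nat trm \<Rightarrow> bool" where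
  "satisfies add mul t u \<longleftrightarrow> (\<forall>\<rho>. eval add mul \<rho> t = eval add mul \<rho> u)"

datatype s7 = Infty | A | One

definition add7 :: "s7 \<Rightarrow> s7 \<Rightarrow> s7" where
  "add7 x y = (if x = y then x else Infty)"

fun mul7 :: "s7 \<Rightarrow> s7 \<Rightarrow> s7" where
  "mul7 Infty y = Infty"
| "mul7 x Infty = Infty"
| "mul7 A A = Infty"
| "mul7 A One = A"
| "mul7 One A = A"
| "mul7 One One = One"

text \<open>Membership in V(S_7), via Birkhoff: satisfies every identity of S_7.\<close>
definition in_V_S7 :: "('a \<Rightarrow> 'a \<Rightarrow> 'a) \<Rightarrow> ('a \<Rightarrow> 'a \<Rightarrow> 'a) \<Rightarrow> bool" where
  "in_V_S7 add mul \<longleftrightarrow> ai_semiring add mul \<and>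
     (\<forall>t u. satisfies add7 mul7 t u \<longrightarrow> satisfies add mul t u)"

definition in_N :: "('a \<Rightarrow> 'a \<Rightarrow> 'a) \<Rightarrow> ('a \<Rightarrow> 'a \<Rightarrow> 'a) \<Rightarrow> bool" where
  "in_N add mul \<longleftrightarrow> in_V_S7 add mul \<and> (\<forall>x y. mul (mul x x) y = mul x x)"

text \<open>M_2 on bool: True = 1, False = 0.\<close>
definition addM2 :: "bool \<Rightarrow> bool \<Rightarrow> bool" where
  "addM2 x y = (if x = y then x else False)"

definition mulM2 :: "bool \<Rightarrow> bool \<Rightarrow> bool" where
  "mulM2 x y = (x \<and> y)"

definition is_hom :: "('a \<Rightarrow> 'a \<Rightarrow> 'a) \<Rightarrow> ('a \<Rightarrow> 'a \<Rightarrow> 'a) \<Rightarrow>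
    ('b \<Rightarrow> 'b \<Rightarrow> 'b) \<Rightarrow> ('b \<Rightarrow> 'b \<Rightarrow> 'b) \<Rightarrow> ('a \<Rightarrow> 'b) \<Rightarrow> bool" where
  "is_hom add mul add' mul' f \<longleftrightarrow>
     (\<forall>x y. f (add x y) = add' (f x) (f y) \<and> f (mul x y) = mul' (f x) (f y))"

definition isomorphic :: "('a \<Rightarrow> 'a \<Rightarrow> 'a) \<Rightarrow> ('a \<Rightarrow> 'a \<Rightarrow> 'a) \<Rightarrow>
    ('b \<Rightarrow> 'b \<Rightarrow> 'b) \<Rightarrow> ('b \<Rightarrow> 'b \<Rightarrow> 'b) \<Rightarrow> bool" where
  "isomorphic add mul add' mul' \<longleftrightarrow> (\<exists>f. bij f \<and> is_hom add mul add' mul' f)"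

definition subsemiring :: "('a \<Rightarrow> 'a \<Rightarrow> 'a) \<Rightarrow> ('a \<Rightarrow> 'a \<Rightarrow> 'a) \<Rightarrow> 'a set \<Rightarrow> bool" where
  "subsemiring add mul T \<longleftrightarrow> T \<noteq> {} \<and> (\<forall>x\<in>T. \<forall>y\<in>T. add x y \<in> T \<and> mul x y \<in> T)"

definition has_sub_S7 :: "('a \<Rightarrow> 'a \<Rightarrow> 'a) \<Rightarrow> ('a \<Rightarrow> 'a \<Rightarrow> 'a) \<Rightarrow> bool" where
  "has_sub_S7 add mul \<longleftrightarrow> (\<exists>T f. subsemiring add mul T \<and> bij_betw f (UNIV :: s7 set) T \<and>
       (\<forall>x y. f (add7 x y) = add (f x) (f y) \<and> f (mul7 x y) = mul (f x) (f y)))"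

end

theory Submission
  imports Defs
begin


definition le :: "('a\<Rightarrow>'a\<Rightarrow>'a) \<Rightarrow> 'a \<Rightarrow> 'a \<Rightarrow> bool" where
  "le add x y \<longleftrightarrow> add x y = y"

fun gt :: "nat \<Rightarrow> nat \<Rightarrow> nat trm \<Rightarrow> nat trm" where
  "gt 0 v w = w"
| "gt (Suc 0) v w = TMul (Var v) w"
| "gt (Suc (Suc 0)) v w = TMul w w"
| "gt (Suc (Suc (Suc m))) v w = TMul (Var v) (TMul w w)"

fun G :: "('a\<Rightarrow>'a\<Rightarrow>'a) \<Rightarrow> nat \<Rightarrow> 'a \<Rightarrow> 'a \<Rightarrow> 'a" where
  "G mul 0 p x = x"
| "G mul (Suc 0) p x = mul p x"
| "G mul (Suc (Suc 0)) p x = mul x x"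
| "G mul (Suc (Suc (Suc m))) p x = mul p (mul x x)"

lemma eval_gt: "eval add mul \<rho> (gt k v w) = G mul k (\<rho> v) (eval add mul \<rho> w)"
  by (induction k v w rule: gt.induct) auto

lemma k4: obtains "k = 0" | "k = Suc 0" | "k = Suc (Suc 0)" | m where "k = Suc (Suc (Suc m))"
  by (metis not0_implies_Suc)

lemma s7_transfer_aux:
  "add7 (G mul7 k r b) (add7 (G mul7 k r a) (G mul7 j p (add7 a b))) =
   add7 (G mul7 k r a) (G mul7 j p (add7 a b))"
  apply (cases k rule: k4; cases j rule: k4)
  apply (cases a; cases b; cases p; cases r; simp add: add7_def)+
  done

lemma s7_transfer: "satisfies add7 mul7
   (TAdd (gt k 3 (Var 1)) (TAdd (gt k 3 (Var 0)) (gt j 2 (TAdd (Var 0) (Var 1)))))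
   (TAdd (gt k 3 (Var 0)) (gt j 2 (TAdd (Var 0) (Var 1))))"
  unfolding satisfies_def by (simp add: eval_gt s7_transfer_aux)

lemma s7_comm: "satisfies add7 mul7 (TMul (Var 0) (Var 1)) (TMul (Var 1) (Var 0))"
  unfolding satisfies_def
  apply (intro allI)
  subgoal for \<rho> by (cases "\<rho> 0"; cases "\<rho> 1"; simp)
  done

lemma s7_cube: "satisfies add7 mul7 (TMul (TMul (Var 0) (Var 0)) (Var 0)) (TMul (Var 0) (Var 0))"
  unfolding satisfies_def
  apply (intro allI)
  subgoal for \<rho> by (cases "\<rho> 0"; simp)
  done

lemma s7_L: "satisfies add7 mul7
   (TMul (TAdd (Var 0) (TMul (Var 0) (Var 1))) (TMul (Var 0) (Var 1)))
   (TMul (TMul (Var 0) (Var 1)) (TMul (Var 0) (Var 1)))"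
  unfolding satisfies_def
  apply (intro allI)
  subgoal for \<rho> by (cases "\<rho> 0"; cases "\<rho> 1"; simp add: add7_def)
  done



locale vs7 =
  fixes add mul :: "'a \<Rightarrow> 'a \<Rightarrow> 'a"
  assumes V: "in_V_S7 add mul"
begin

lemma eqI: "satisfies add7 mul7 t u \<Longrightarrow> eval add mul \<rho> t = eval add mul \<rho> u"
  using V unfolding in_V_S7_def satisfies_def by blast

lemma ai: "ai_semiring add mul" using V by (simp add: in_V_S7_def)

lemma add_assoc: "add (add x y) z = add x (add y z)" using ai unfolding ai_semiring_def by blast
lemma add_comm: "add x y = add y x" using ai unfolding ai_semiring_def by blast
lemma add_idem: "add x x = x" using ai unfolding ai_semiring_def by blast
lemma mul_assoc: "mul (mul x y) z = mul x (mul y z)" using ai unfolding ai_semiring_def by blast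
lemma distl: "mul x (add y z) = add (mul x y) (mul x z)" using ai unfolding ai_semiring_def by blast
lemma distr: "mul (add x y) z = add (mul x z) (mul y z)" using ai unfolding ai_semiring_def by blast
lemma mul_comm: "mul x y = mul y x"
  using eqI[OF s7_comm, of "\<lambda>n. if n = 0 then x else y"] by simp

sublocale A: semilattice add
  by unfold_locales (rule add_assoc, rule add_comm, rule add_idem)
sublocale M: abel_semigroup mul
  by unfold_locales (rule mul_assoc, rule mul_comm)

lemma cube: "mul (mul x x) x = mul x x"
  using eqI[OF s7_cube, of "\<lambda>n. x"] by simp

lemma sq_idem: "mul (mul x x) (mul x x) = mul x x"
  by (metis cube mul_assoc)

lemma le_add_iff: "le add (add u v) c \<longleftrightarrow> le add u c \<and> le add v c"
  unfolding le_def by (metis A.assoc A.commute A.left_idem)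

lemma transfer:
  assumes "le add (G mul j p (add x y)) c" "le add (G mul k r x) c"
  shows "le add (G mul k r y) c"
proof -
  have e: "add (G mul k r y) (add (G mul k r x) (G mul j p (add x y))) =
           add (G mul k r x) (G mul j p (add x y))"
    using eqI[OF s7_transfer, of "\<lambda>n. if n = 0 then x else if n = 1 then y else if n = 2 then p else r"]
    by (simp add: eval_gt)
  have "le add (add (G mul k r x) (G mul j p (add x y))) c" using assms le_add_iff by blast
  then have "le add (add (G mul k r y) (add (G mul k r x) (G mul j p (add x y)))) c" by (simp only: e)
  then show ?thesis using le_add_iff by blast
qed

definition R where "R c x y \<longleftrightarrow> (\<forall>k p. le add (G mul k p x) c = le add (G mul k p y) c)"

lemma R_of_le: assumes "le add (G mul j p (add x y)) c" shows "R c x y"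
  unfolding R_def
proof (intro allI iffI)
  fix k r
  show "le add (G mul k r x) c \<Longrightarrow> le add (G mul k r y) c" using transfer assms by blast
  show "le add (G mul k r y) c \<Longrightarrow> le add (G mul k r x) c" using transfer[of j p y x c k r] assms
    by (simp add: add_comm)
qed

lemma G_mul: "\<exists>k' p'. G mul k p (mul x w) = G mul k' p' x"
proof (cases k rule: k4)
  case 1 then show ?thesis by (intro exI[of _ "Suc 0"] exI[of _ w]) (simp add: M.commute)
next
  case 2 then show ?thesis by (intro exI[of _ "Suc 0"] exI[of _ "mul p w"]) (simp add: M.assoc M.commute M.left_commute)
next
  case 3 then show ?thesis by (intro exI[of _ "Suc (Suc (Suc 0))"] exI[of _ "mul w w"]) (simp add: M.assoc M.commute M.left_commute)
next
  case (4 m) then show ?thesis by (intro exI[of _ "Suc (Suc (Suc 0))"] exI[of _ "mul p (mul w w)"]) (simp add: M.assoc M.commute M.left_commute)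
qed

lemma compat_mul: "R c x y \<Longrightarrow> R c (mul x w) (mul y w)"
  unfolding R_def
proof (intro allI)
  fix k p assume h: "\<forall>k p. le add (G mul k p x) c = le add (G mul k p y) c"
  obtain k' p' where "\<And>x. G mul k p (mul x w) = G mul k' p' x"
  proof (cases k rule: k4)
    case 1 then show ?thesis using that[of "Suc 0" w] by (simp add: M.commute)
  next
    case 2 then show ?thesis using that[of "Suc 0" "mul p w"] by (simp add: M.assoc M.commute M.left_commute)
  next
    case 3 then show ?thesis using that[of "Suc (Suc (Suc 0))" "mul w w"] by (simp add: M.assoc M.commute M.left_commute)
  next
    case (4 m) then show ?thesis using that[of "Suc (Suc (Suc 0))" "mul p (mul w w)"] by (simp add: M.assoc M.commute M.left_commute)
  qed
  then show "le add (G mul k p (mul x w)) c = le add (G mul k p (mul y w)) c" using h by simp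
qed

lemma sq_add: "mul (add u w) (add u w) = add (mul u u) (add (mul w u) (mul w w))"
  by (simp add: distl distr M.commute A.assoc A.commute A.left_commute)

lemma compat_add: "R c x y \<Longrightarrow> R c (add x w) (add y w)"
  unfolding R_def
proof (intro allI)
  fix k p assume h: "\<forall>k p. le add (G mul k p x) c = le add (G mul k p y) c"
  show "le add (G mul k p (add x w)) c = le add (G mul k p (add y w)) c"
  proof (cases k rule: k4)
    case 1 then show ?thesis using h[rule_format, of 0 p] by (simp add: le_add_iff)
  next
    case 2 then show ?thesis using h[rule_format, of "Suc 0" p] by (simp add: le_add_iff distl)
  next
    case 3 then show ?thesis using h[rule_format, of "Suc (Suc 0)" p] h[rule_format, of "Suc 0" w]
      by (simp add: le_add_iff sq_add)
  next
    case (4 m) then show ?thesis using h[rule_format, of k p] h[rule_format, of "Suc 0" "mul p w"]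
      by (simp add: le_add_iff sq_add distl M.assoc M.commute M.left_commute)
  qed
qed

lemma cong_R: "congruence add mul {(x, y). R c x y}"
  unfolding congruence_def
proof (intro conjI allI impI)
  show "equiv UNIV {(x, y). R c x y}"
    unfolding equiv_def refl_on_def sym_def trans_def R_def by auto
  fix a b c' d assume ab: "(a, b) \<in> {(x, y). R c x y}" and cd: "(c', d) \<in> {(x, y). R c x y}"
  have t: "R c u v \<Longrightarrow> R c v w \<Longrightarrow> R c u w" for u v w unfolding R_def by auto
  have "R c (add a c') (add b c')" using ab compat_add by auto
  moreover have "R c (add c' b) (add d b)" using cd compat_add by auto
  ultimately show "(add a c', add b d) \<in> {(x, y). R c x y}" using t by (auto simp: add_comm)
  have "R c (mul a c') (mul b c')" using ab compat_mul by auto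
  moreover have "R c (mul c' b) (mul d b)" using cd compat_mul by auto
  ultimately show "(mul a c', mul b d) \<in> {(x, y). R c x y}" using t by (auto simp: mul_comm)
qed

end



locale vs7si = vs7 +
  assumes SI: "subdirectly_irreducible add mul"
begin

lemma exists_c: "\<exists>c. \<forall>x y. R c x y \<longrightarrow> x = y"
proof (rule ccontr)
  assume "\<not> ?thesis"
  then have nc: "\<forall>c. \<exists>x y. R c x y \<and> x \<noteq> y" by blast
  obtain Mo where Mc: "congruence add mul Mo" and MI: "Mo \<noteq> Id"
    and Mmin: "\<And>R'. congruence add mul R' \<and> R' \<noteq> Id \<Longrightarrow> Mo \<subseteq> R'"
    using SI unfolding subdirectly_irreducible_def by blast
  have "Id \<subseteq> Mo" using Mc unfolding congruence_def equiv_def refl_on_def by auto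
  with MI obtain x y where xy: "(x, y) \<in> Mo" "x \<noteq> y" by auto
  have sub: "Mo \<subseteq> {(u, v). R c u v}" for c
  proof (rule Mmin, intro conjI)
    show "congruence add mul {(u, v). R c u v}" by (rule cong_R)
    from nc obtain u v where "R c u v" "u \<noteq> v" by blast
    then show "{(u, v). R c u v} \<noteq> Id" by auto
  qed
  have "R x x y" "R y x y" using sub xy(1) by auto
  then have "le add x x = le add y x" "le add x y = le add y y"
    unfolding R_def by (metis G.simps(1))+
  then have "add y x = x" "add x y = y" by (auto simp: le_def A.idem)
  then show False using xy(2) by (simp add: add_comm)
qed

definition cc where "cc = (SOME c. \<forall>x y. R c x y \<longrightarrow> x = y)"

lemma R_inj: "R cc x y \<Longrightarrow> x = y"
  using someI_ex[OF exists_c] unfolding cc_def by blast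

lemma distinct_false: "x \<noteq> y \<Longrightarrow> \<not> le add (G mul k p (add x y)) cc"
  using R_of_le R_inj by blast

lemma ex_false: "\<exists>z. \<forall>k p. \<not> le add (G mul k p z) cc"
proof -
  obtain x y :: 'a where "x \<noteq> y" using SI unfolding subdirectly_irreducible_def by blast
  then show ?thesis using distinct_false by blast
qed

definition zz where "zz = (SOME z. \<forall>k p. \<not> le add (G mul k p z) cc)"

lemma zz_false: "\<not> le add (G mul k p zz) cc"
  using someI_ex[OF ex_false] unfolding zz_def by blast

lemma false_zz: "(\<And>k p. \<not> le add (G mul k p w) cc) \<Longrightarrow> w = zz"
  using R_inj[of w zz] zz_false unfolding R_def by blast

lemma flat: "x \<noteq> y \<Longrightarrow> add x y = zz"
  using false_zz distinct_false by blast

lemma zz_add: "add zz w = zz"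
  by (cases "w = zz") (auto simp: flat)

lemma zz_mul: "mul zz w = zz"
proof (rule false_zz)
  fix k p
  obtain k' p' where "G mul k p (mul zz w) = G mul k' p' zz" using G_mul by blast
  then show "\<not> le add (G mul k p (mul zz w)) cc" using zz_false by simp
qed

lemma mul_zz: "mul w zz = zz" using zz_mul mul_comm by metis

lemma flat_semiring: "flat_semiring add mul zz"
  unfolding flat_semiring_def mult_zero_def using ai flat zz_mul mul_zz by blast

lemma cc_le: "le add cc cc" by (simp add: le_def)

lemma cc_ne: "cc \<noteq> zz" using zz_false[of 0] cc_le by auto

lemma le_cc: "le add x cc \<Longrightarrow> x = cc"
  using flat cc_ne unfolding le_def by metis

lemma reach: "x \<noteq> zz \<Longrightarrow> x = cc \<or> (\<exists>t. mul t x = cc)"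
proof -
  assume "x \<noteq> zz"
  then have "\<not> R cc x zz" using R_inj by blast
  then obtain k p where "le add (G mul k p x) cc" using zz_false unfolding R_def by blast
  then have g: "G mul k p x = cc" by (rule le_cc)
  show ?thesis
  proof (cases k rule: k4)
    case 1 then show ?thesis using g by simp
  next
    case 2 then show ?thesis using g by auto
  next
    case 3 then show ?thesis using g by auto
  next
    case (4 m) then show ?thesis using g by (auto simp: mul_assoc[symmetric])
  qed
qed

lemma Lem: assumes "mul s t = e" "mul e e = e" "e \<noteq> zz" shows "s = e"
proof (rule ccontr)
  assume "s \<noteq> e"
  have "mul (add s (mul s t)) (mul s t) = mul (mul s t) (mul s t)"
    using eqI[OF s7_L, of "\<lambda>n. if n = 0 then s else t"] by simp
  then have "mul (add s e) e = e" using assms by simp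
  then show False using \<open>s \<noteq> e\<close> flat zz_mul assms(3) by metis
qed

lemma ideal_cl: "mul s cc \<in> {zz, cc}"
proof (rule ccontr)
  assume a: "mul s cc \<notin> {zz, cc}"
  then obtain t where t: "mul t (mul s cc) = cc" using reach by blast
  define u where "u = mul t s"
  have uc: "mul u cc = cc" using t by (simp add: u_def mul_assoc)
  define e where "e = mul u u"
  have ee: "mul e e = e" unfolding e_def by (rule sq_idem)
  have ec: "mul e cc = cc" unfolding e_def using uc by (simp add: mul_assoc)
  have ez: "e \<noteq> zz"
  proof
    assume "e = zz" then have "mul e cc = zz" by (simp add: zz_mul)
    then show False using ec cc_ne by simp
  qed
  have "mul s (mul t (mul t s)) = e" unfolding e_def u_def by (simp add: M.assoc M.commute M.left_commute)
  then have "s = e" using Lem ee ez by blast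
  then show False using a ec by simp
qed

lemma ideal: "mult_ideal mul {zz, cc}"
  unfolding mult_ideal_def
proof (intro conjI allI impI)
  show "{zz, cc} \<noteq> {}" by simp
  fix s j assume j: "j \<in> {zz, cc}"
  show sj: "mul s j \<in> {zz, cc}"
  proof (cases "j = zz")
    case True then show ?thesis by (simp add: mul_zz)
  next
    case False then have "j = cc" using j by simp
    then show ?thesis using ideal_cl by simp
  qed
  have "mul j s = mul s j" by (rule mul_comm)
  then show "mul j s \<in> {zz, cc}" using sj by simp
qed

lemma ideal_least: assumes "mult_ideal mul J" "J \<noteq> {zz}" shows "{zz, cc} \<subseteq> J"
proof -
  have cl: "\<And>s j. j \<in> J \<Longrightarrow> mul s j \<in> J" using assms(1) unfolding mult_ideal_def by blast
  obtain j where j: "j \<in> J" using assms(1) unfolding mult_ideal_def by blast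
  have zJ: "zz \<in> J" using cl[OF j, of zz] by (simp add: zz_mul)
  obtain x where x: "x \<in> J" "x \<noteq> zz" using assms(2) zJ by blast
  have "cc \<in> J"
  proof (cases "x = cc")
    case True then show ?thesis using x by simp
  next
    case False
    then obtain t where "mul t x = cc" using reach[OF x(2)] by blast
    then show ?thesis using cl[OF x(1), of t] by simp
  qed
  with zJ show ?thesis by simp
qed

lemma idem_cc: "mul e e = e \<Longrightarrow> e \<noteq> zz \<Longrightarrow> mul cc e = cc"
proof -
  assume a: "mul e e = e" "e \<noteq> zz"
  from reach[OF a(2)] show ?thesis
  proof
    assume "e = cc" then show ?thesis using a by simp
  next
    assume "\<exists>t. mul t e = cc"
    then obtain t where "mul t e = cc" by blast
    then show ?thesis using a by (metis mul_assoc)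
  qed
qed

lemma idem_unique: assumes "mul e e = e" "e \<noteq> zz" "mul f f = f" "f \<noteq> zz" shows "e = f"
proof (rule ccontr)
  assume "e \<noteq> f"
  then have "add e f = zz" by (rule flat)
  have "mul cc (add e f) = cc" using idem_cc assms by (simp add: distl)
  then show False using \<open>add e f = zz\<close> mul_zz cc_ne by simp
qed

end



lemma UNIV_s7: "(UNIV :: s7 set) = {Infty, A, One}"
  using s7.exhaust by auto

context vs7si
begin

lemma main: "\<exists>z. flat_semiring add mul z \<and>
           (\<exists>I. mult_ideal mul I \<and> I \<noteq> {z} \<and>
                (\<forall>J. mult_ideal mul J \<and> J \<noteq> {z} \<longrightarrow> I \<subseteq> J) \<and>
                card I = 2) \<and>
           finite (idempotents mul) \<and> card (idempotents mul) \<le> 2 \<and>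
           (card (idempotents mul) = 1 \<longrightarrow> in_N add mul) \<and>
           (card (idempotents mul) = 2 \<longrightarrow>
              isomorphic add mul addM2 mulM2 \<or> has_sub_S7 add mul)"
proof (rule exI[of _ zz], intro conjI)
  show "flat_semiring add mul zz" by (rule flat_semiring)
  show "\<exists>I. mult_ideal mul I \<and> I \<noteq> {zz} \<and>
                (\<forall>J. mult_ideal mul J \<and> J \<noteq> {zz} \<longrightarrow> I \<subseteq> J) \<and> card I = 2"
    using ideal ideal_least cc_ne by (intro exI[of _ "{zz, cc}"]) auto
  have zE: "zz \<in> idempotents mul" by (simp add: idempotents_def zz_mul)
  consider (two) e where "mul e e = e" "e \<noteq> zz" | (one) "\<forall>e. mul e e = e \<longrightarrow> e = zz" by blast
  then have "finite (idempotents mul) \<and> card (idempotents mul) \<le> 2 \<and>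
           (card (idempotents mul) = 1 \<longrightarrow> in_N add mul) \<and>
           (card (idempotents mul) = 2 \<longrightarrow>
              isomorphic add mul addM2 mulM2 \<or> has_sub_S7 add mul)"
  proof cases
    case one
    have E: "idempotents mul = {zz}"
    proof (intro equalityI subsetI)
      fix x assume "x \<in> idempotents mul" then show "x \<in> {zz}" using one by (simp add: idempotents_def)
    qed (simp add: zE)
    have N: "in_N add mul" unfolding in_N_def
    proof (intro conjI allI)
      show "in_V_S7 add mul" by (rule V)
      fix x y
      have "mul x x = zz" using one[rule_format, OF sq_idem[of x]] .
      then show "mul (mul x x) y = mul x x" by (simp add: zz_mul)
    qed
    show ?thesis using E N by simp
  next
    case two
    have E: "idempotents mul = {zz, e}"
    proof (intro equalityI subsetI)
      fix x assume "x \<in> idempotents mul"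
      then have "mul x x = x" by (simp add: idempotents_def)
      then have "x = zz \<or> x = e" using idem_unique[of x e] two by blast
      then show "x \<in> {zz, e}" by simp
    next
      fix x assume "x \<in> {zz, e}" then show "x \<in> idempotents mul" using zE two by (auto simp: idempotents_def)
    qed
    have ce: "mul cc e = cc" using idem_cc[OF two] .
    have iso: "isomorphic add mul addM2 mulM2 \<or> has_sub_S7 add mul"
    proof (cases "cc = e")
      case True
      have all: "x = zz \<or> x = e" for x
      proof (cases "x = zz")
        case False
        show ?thesis
        proof (cases "x = cc")
          case True then show ?thesis using \<open>cc = e\<close> by simp
        next
          case False
          then obtain t where "mul t x = cc" using reach \<open>x \<noteq> zz\<close> by blast
          then have "mul x t = e" using \<open>cc = e\<close> mul_comm[of x t] by simp
          then show ?thesis using Lem[of x t e] two by simp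
        qed
      qed simp
      have f1: "add zz e = zz" "add e zz = zz" using flat[of zz e] flat[of e zz] two(2) by auto
      have "isomorphic add mul addM2 mulM2"
        unfolding isomorphic_def
      proof (intro exI conjI)
        show "bij (\<lambda>x. x = e)" unfolding bij_def inj_def surj_def
        proof (intro conjI allI impI)
          fix x y assume "(x = e) = (y = e)" then show "x = y" using all[of x] all[of y] by auto
        next
          fix b :: bool show "\<exists>a. b = (a = e)"
            by (cases b) (auto intro: exI[of _ e] exI[of _ zz] simp: two(2))
        qed
        show "is_hom add mul addM2 mulM2 (\<lambda>x. x = e)" unfolding is_hom_def
        proof (intro allI)
          fix x y
          show "(add x y = e) = addM2 (x = e) (y = e) \<and> (mul x y = e) = mulM2 (x = e) (y = e)"
            using all[of x] all[of y] two f1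
            by (auto simp: addM2_def mulM2_def zz_mul mul_zz A.idem)
        qed
      qed
      then show ?thesis by simp
    next
      case False
      have "mul cc cc \<in> {zz, cc}" by (rule ideal_cl)
      moreover have "mul cc cc \<noteq> cc" using idem_unique two cc_ne False by blast
      ultimately have cc2: "mul cc cc = zz" by simp
      have ec: "mul e cc = cc" using ce mul_comm by metis
      define f where "f x = (case x of Infty \<Rightarrow> zz | A \<Rightarrow> cc | One \<Rightarrow> e)" for x
      have fl: "add zz cc = zz" "add cc zz = zz" "add zz e = zz" "add e zz = zz" "add cc e = zz" "add e cc = zz"
        using flat[of zz cc] flat[of cc zz] flat[of zz e] flat[of e zz] flat[of cc e] flat[of e cc]
          two(2) cc_ne False by auto
      have hom: "f (add7 x y) = add (f x) (f y) \<and> f (mul7 x y) = mul (f x) (f y)" for x y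
        by (cases x; cases y) (simp_all add: f_def add7_def fl A.idem zz_mul mul_zz cc2 ce ec two(1))
      have "has_sub_S7 add mul" unfolding has_sub_S7_def
      proof (intro exI conjI allI)
        show "subsemiring add mul (f ` UNIV)" unfolding subsemiring_def
        proof (intro conjI ballI)
          show "f ` UNIV \<noteq> {}" by simp
          fix u v assume "u \<in> f ` UNIV" "v \<in> f ` UNIV"
          then obtain x y where "u = f x" "v = f y" by blast
          then show "add u v \<in> f ` UNIV" "mul u v \<in> f ` UNIV" using hom[of x y] by (metis rangeI)+
        qed
        show "bij_betw f UNIV (f ` UNIV)" unfolding bij_betw_def inj_def
        proof (intro conjI allI impI refl)
          fix x y assume "f x = f y" then show "x = y"
            using cc_ne two(2) False by (cases x; cases y) (auto simp: f_def)
        qed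
        fix x y show "f (add7 x y) = add (f x) (f y)" "f (mul7 x y) = mul (f x) (f y)" using hom by auto
      qed
      then show ?thesis by simp
    qed
    have "card {zz, e} = 2" using two by simp
    then show ?thesis using E iso by simp
  qed
  then show "finite (idempotents mul)" "card (idempotents mul) \<le> 2"
    "card (idempotents mul) = 1 \<longrightarrow> in_N add mul"
    "card (idempotents mul) = 2 \<longrightarrow> isomorphic add mul addM2 mulM2 \<or> has_sub_S7 add mul" by auto
qed

end

theorem theorem3p6:
  fixes add mul :: "'a \<Rightarrow> 'a \<Rightarrow> 'a"
  assumes "in_V_S7 add mul"
    and "subdirectly_irreducible add mul"
  shows "\<exists>z. flat_semiring add mul z \<and>
           (\<exists>I. mult_ideal mul I \<and> I \<noteq> {z} \<and>
                (\<forall>J. mult_ideal mul J \<and> J \<noteq> {z} \<longrightarrow> I \<subseteq> J) \<and>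
                card I = 2) \<and>
           finite (idempotents mul) \<and> card (idempotents mul) \<le> 2 \<and>
           (card (idempotents mul) = 1 \<longrightarrow> in_N add mul) \<and>
           (card (idempotents mul) = 2 \<longrightarrow>
              isomorphic add mul addM2 mulM2 \<or> has_sub_S7 add mul)"
proof -
  interpret vs7si add mul using assms by unfold_locales
  show ?thesis by (rule main)
qed

end
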